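(* Fix integers $t\geq 1$ and $r\geq 1$. Then, as $m\to\infty$ (with $m\geq r$), \[ R_t(r,m) \geq \left(1-\frac{1}{2^t}\right)2^m-\frac{\sqrt{2t(2^t-1) \ln 2}}{2^t\sqrt{r!}}\, m^{r/2}\,2^{m/2}(1+o(1)). \]
   Context: For a $t\times n$ matrix $\mathbf{v}$ over $\mathbb{F}_q$ with rows $\overline{v}_1,\dots,\overline{v}_t$, its $t$-weight is $\mathrm{wt}^{(t)}(\mathbf{v})=\left|\bigcup_{i=1}^t \mathrm{supp}(\overline{v}_i)\right|$, and $d^{(t)}(\mathbf{u},\mathbf{v})=\mathrm{wt}^{(t)}(\mathbf{u}-\mathbf{v})$. For a linear code $C\subseteq\mathbb{F}_q^n$ and $t\in\mathbb{N}$, let $C^t$ be the set of $t\times n$ matrices all of whose rows lie in $C$. The $t$-th generalized covering radius $R_t(C)$ is the smallest integer $\rho$ such that for every $\mathbf{v}\in\mathbb{F}_q^{t\times n}$ there is $\mathbf{c}\in C^t$ with $d^{(t)}(\mathbf{v},\mathbf{c})\leq \rho$. Binary Reed–Muller codes $\mathrm{RM}(r,m)\subseteq\mathbb{F}_2^{2^m}$ ($0\le r\le m$) are defined recursively: $\mathrm{RM}(0,m)=\{\overline{0},\overline{1}\}$, $\mathrm{RM}(m,m)=\mathbb{F}_2^{2^m}$, and for $1\leq r\leq m-1$, $\mathrm{RM}(r,m)=\{(\overline{u},\overline{u}+\overline{v}) : \overline{u}\in \mathrm{RM}(r,m-1),\ \overline{v}\in\mathrm{RM}(r-1,m-1)\}$.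 It is a linear code of length $2^m$ and dimension $\sum_{i=0}^r\binom{m}{i}$. Write $R_t(r,m)=R_t(\mathrm{RM}(r,m))$. *)

theory Defs
  imports Complex_Main
begin

text \<open>Binary words of length n are represented as bool lists (True = 1, False = 0);
  addition in F_2 is exclusive or, i.e. (\<noteq>).\<close>

fun RM :: "nat \<Rightarrow> nat \<Rightarrow> bool list set" where
  "RM 0 m = {replicate (2^m) False, replicate (2^m) True}"
| "RM (Suc r) m =
     (if m \<le> Suc r then {xs. length xs = 2^m}
      else {u @ map2 (\<noteq>) u v | u v. u \<in> RM (Suc r) (m - 1) \<and> v \<in> RM r (m - 1)})"

text \<open>A t x n matrix is a list of t rows, each a word of length n.
  t-distance: number of columns in which the two matrices differ
  (= t-weight of their difference).\<close>

definition tdist :: "nat \<Rightarrow> bool list list \<Rightarrow> bool list list \<Rightarrow> nat" where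
  "tdist n V W = card {j. j < n \<and> (\<exists>i < length V. V ! i ! j \<noteq> W ! i ! j)}"

definition gcr :: "nat \<Rightarrow> nat \<Rightarrow> bool list set \<Rightarrow> nat" where
  "gcr t n C = (LEAST \<rho>. \<forall>V. length V = t \<and> (\<forall>x \<in> set V. length x = n) \<longrightarrow>
      (\<exists>Cs. length Cs = t \<and> set Cs \<subseteq> C \<and> tdist n V Cs \<le> \<rho>))"

end

theory Submission
  imports Defs
begin

declare RM.simps(2)[simp del]

definition kk :: "nat \<Rightarrow> nat \<Rightarrow> nat" where "kk r m = (\<Sum>i\<le>r. m choose i)"

lemma kk_pascal: "kk (Suc r) (Suc m) = kk (Suc r) m + kk r m"
  unfolding kk_def
proof (induction r)
  case 0 then show ?case by simp
next
  case (Suc r)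
  have "(\<Sum>i\<le>Suc (Suc r). Suc m choose i) = (\<Sum>i\<le>Suc r. Suc m choose i) + (Suc m choose Suc (Suc r))"
    by simp
  also have "\<dots> = (\<Sum>i\<le>Suc r. m choose i) + (\<Sum>i\<le>r. m choose i) + ((m choose Suc (Suc r)) + (m choose Suc r))"
    using Suc by simp
  finally show ?case by simp
qed

lemma kk_full: "m \<le> r \<Longrightarrow> kk r m = 2^m"
proof -
  assume "m \<le> r"
  have "(\<Sum>i\<le>r. m choose i) = (\<Sum>i\<le>m. m choose i)"
    by (rule sum.mono_neutral_right) (use \<open>m \<le> r\<close> in auto)
  then show ?thesis unfolding kk_def using choose_row_sum by simp
qed

lemma RM_props:
  "finite (RM r m) \<and> RM r m \<subseteq> {xs. length xs = 2^m} \<and> replicate (2^m) False \<in> RM r m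
   \<and> card (RM r m) \<le> 2^(kk r m)"
proof (induction r m rule: RM.induct)
  case (1 m)
  then show ?case by (auto simp: kk_def card_insert_if)
next
  case (2 r m)
  show ?case
  proof (cases "m \<le> Suc r")
    case True
    have fin: "finite {xs::bool list. length xs = 2^m}"
      using finite_lists_length_eq[of "UNIV::bool set" "2^m"] by simp
    have "card {xs::bool list. length xs = 2^m} = 2^(2^m)"
      using card_lists_length_eq[of "UNIV::bool set" "2^m"] by simp
    then show ?thesis using True fin kk_full[OF True] by (simp add: RM.simps(2))
  next
    case False
    then obtain m' where m': "m = Suc m'" by (cases m) auto
    have IH1: "finite (RM (Suc r) m') \<and> RM (Suc r) m' \<subseteq> {xs. length xs = 2^m'} \<and> replicate (2^m') False \<in> RM (Suc r) m'
   \<and> card (RM (Suc r) m') \<le> 2^(kk (Suc r) m')" using 2(1) False m' by simp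
    have IH2: "finite (RM r m') \<and> RM r m' \<subseteq> {xs. length xs = 2^m'} \<and> replicate (2^m') False \<in> RM r m'
   \<and> card (RM r m') \<le> 2^(kk r m')" using 2(2) False m' by simp
    define f where "f = (\<lambda>(u::bool list,v::bool list). u @ map2 (\<noteq>) u v)"
    have eq0: "RM (Suc r) m = {u @ map2 (\<noteq>) u v | u v. u \<in> RM (Suc r) m' \<and> v \<in> RM r m'}"
      using False m' by (simp add: RM.simps(2))
    have eq: "RM (Suc r) m = f ` (RM (Suc r) m' \<times> RM r m')"
      unfolding eq0 f_def by force
    have fin: "finite (RM (Suc r) m)" using eq IH1 IH2 by simp
    have len: "RM (Suc r) m \<subseteq> {xs. length xs = 2^m}"
      using eq IH1 IH2 m' unfolding f_def by (force simp: subset_iff)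
    have mr: "map2 (\<noteq>) (replicate k False) (replicate k False) = replicate k False" for k
      by (induct k) auto
    have "f (replicate (2^m') False, replicate (2^m') False) = replicate (2^m' + 2^m') False"
      unfolding f_def by (simp only: case_prod_conv replicate_add mr)
    then have "f (replicate (2^m') False, replicate (2^m') False) = replicate (2^m) False"
      unfolding m' by (simp only: power_Suc mult_2)
    moreover have "(replicate (2^m') False, replicate (2^m') False) \<in> RM (Suc r) m' \<times> RM r m'"
      using IH1 IH2 by simp
    ultimately have z: "replicate (2^m) False \<in> RM (Suc r) m"
      unfolding eq by (rule image_eqI[OF sym])
    have "card (RM (Suc r) m) \<le> card (RM (Suc r) m' \<times> RM r m')"
      unfolding eq by (rule card_image_le) (use IH1 IH2 in simp)
    also have "\<dots> = card (RM (Suc r) m') * card (RM r m')" by (simp add: card_cartesian_product)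
    also have "\<dots> \<le> 2^(kk (Suc r) m') * 2^(kk r m')" using IH1 IH2 by (intro mult_mono) auto
    also have "\<dots> = 2^(kk (Suc r) m)" by (simp add: m' kk_pascal power_add)
    finally show ?thesis using fin len z by simp
  qed
qed

definition mats :: "nat \<Rightarrow> nat \<Rightarrow> bool list list set" where
  "mats t n = {V. length V = t \<and> (\<forall>x\<in>set V. length x = n)}"

lemma mats_alt: "mats t n = {V. set V \<subseteq> {x. length x = n} \<and> length V = t}"
  unfolding mats_def by auto

lemma finite_mats: "finite (mats t n)"
proof -
  have "finite {x::bool list. length x = n}"
    using finite_lists_length_eq[of "UNIV::bool set" n] by simp
  then show ?thesis unfolding mats_alt by (rule finite_lists_length_eq)
qed

lemma finite_blists: "finite {c::bool list. length c = t}"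
  using finite_lists_length_eq[of "UNIV::bool set" t] by simp

lemma card_blists: "card {c::bool list. length c = t} = 2^t"
  using card_lists_length_eq[of "UNIV::bool set" t] by simp

lemma map2_hd_tl: "\<forall>x\<in>set V. x \<noteq> [] \<Longrightarrow> map2 (#) (map hd V) (map tl V) = V"
  by (induction V) auto

lemma mats_Suc: "mats t (Suc n) = (\<lambda>(c,V). map2 (#) c V) ` ({c. length c = t} \<times> mats t n)"
proof
  show "mats t (Suc n) \<subseteq> (\<lambda>(c,V). map2 (#) c V) ` ({c. length c = t} \<times> mats t n)"
  proof
    fix V assume V: "V \<in> mats t (Suc n)"
    then have ne: "\<forall>x\<in>set V. x \<noteq> []" unfolding mats_def by auto
    have "map tl V \<in> mats t n" using V unfolding mats_def by auto
    moreover have "length (map hd V) = t" using V unfolding mats_def by auto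
    ultimately show "V \<in> (\<lambda>(c,V). map2 (#) c V) ` ({c. length c = t} \<times> mats t n)"
      using map2_hd_tl[OF ne] by (metis (mono_tags, lifting) SigmaI case_prod_conv image_eqI mem_Collect_eq)
  qed
next
  show "(\<lambda>(c,V). map2 (#) c V) ` ({c. length c = t} \<times> mats t n) \<subseteq> mats t (Suc n)"
    unfolding mats_def by clarsimp (metis set_zip_rightD)
qed

lemma map2_cons_inj:
  assumes "length c = length V" "length c' = length V'" "map2 (#) c V = map2 (#) c' V'"
  shows "c = c' \<and> V = V'"
proof -
  have "length c = length c'" using arg_cong[OF assms(3), of length] assms(1,2) by simp
  moreover have "c ! i = c' ! i \<and> V ! i = V' ! i" if "i < length c" for i
  proof -
    have "map2 (#) c V ! i = map2 (#) c' V' ! i" using assms(3) by simp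
    then show ?thesis using that assms(1,2) \<open>length c = length c'\<close> by simp
  qed
  ultimately show ?thesis using assms(1,2) by (simp add: list_eq_iff_nth_eq)
qed

lemma inj_map2: "inj_on (\<lambda>(c,V). map2 (#) c V) ({c. length c = t} \<times> mats t n)"
proof (rule inj_onI)
  fix p q assume p: "p \<in> {c. length c = t} \<times> mats t n" and q: "q \<in> {c. length c = t} \<times> mats t n"
    and e: "(\<lambda>(c,V). map2 (#) c V) p = (\<lambda>(c,V). map2 (#) c V) q"
  obtain c V where pc: "p = (c, V)" by (cases p)
  obtain c' V' where qc: "q = (c', V')" by (cases q)
  have "length c = length V" "length c' = length V'" using p q unfolding pc qc mats_def by auto
  moreover have "map2 (#) c V = map2 (#) c' V'" using e unfolding pc qc by simp
  ultimately have "c = c' \<and> V = V'" by (rule map2_cons_inj)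
  then show "p = q" unfolding pc qc by simp
qed

lemma tdist_cons:
  assumes "length c = t" "length w = t" "V \<in> mats t n" "W \<in> mats t n"
  shows "tdist (Suc n) (map2 (#) c V) (map2 (#) w W) = (if c = w then 0 else 1) + tdist n V W"
proof -
  define P where "P j = (\<exists>i<t. map2 (#) c V ! i ! j \<noteq> map2 (#) w W ! i ! j)" for j
  have lV: "length V = t" "length W = t" using assms unfolding mats_def by auto
  have l2: "length (map2 (#) c V) = t" using assms lV by simp
  have P0: "P 0 = (c \<noteq> w)"
    unfolding P_def using assms lV by (auto simp: list_eq_iff_nth_eq)
  have PS: "P (Suc j) = (\<exists>i<length V. V ! i ! j \<noteq> W ! i ! j)" for j
    unfolding P_def using assms lV by auto
  have "{j. j < Suc n \<and> (\<exists>i<length (map2 (#) c V). map2 (#) c V ! i ! j \<noteq> map2 (#) w W ! i ! j)}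
      = {j. j < Suc n \<and> P j}" unfolding P_def l2 by simp
  also have "\<dots> = {j::nat. j = 0 \<and> P 0} \<union> Suc ` {j. j < n \<and> P (Suc j)}"
    by (auto simp: less_Suc_eq_0_disj)
  finally have eq: "{j. j < Suc n \<and> (\<exists>i<length (map2 (#) c V). map2 (#) c V ! i ! j \<noteq> map2 (#) w W ! i ! j)}
      = {j::nat. j = 0 \<and> P 0} \<union> Suc ` {j. j < n \<and> P (Suc j)}" .
  have "card ({j::nat. j = 0 \<and> P 0} \<union> Suc ` {j. j < n \<and> P (Suc j)})
     = card {j::nat. j = 0 \<and> P 0} + card (Suc ` {j. j < n \<and> P (Suc j)})"
    by (subst card_Un_disjoint) auto
  also have "card (Suc ` {j. j < n \<and> P (Suc j)}) = card {j. j < n \<and> P (Suc j)}"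
    by (rule card_image) simp
  also have "card {j::nat. j = 0 \<and> P 0} = (if c = w then 0 else 1)"
    using P0 by auto
  finally show ?thesis unfolding tdist_def eq PS by simp
qed

lemma inner_sum:
  fixes x :: real
  assumes "length w = t"
  shows "(\<Sum>c\<in>{c::bool list. length c = t}. (if c = w then 1 else x)) = 1 + (2^t - 1) * x"
proof -
  have "(\<Sum>c\<in>{c::bool list. length c = t}. (if c = w then 1 else x))
     = (if w = w then 1 else x) + (\<Sum>c\<in>{c::bool list. length c = t} - {w}. (if c = w then 1 else x))"
    by (rule sum.remove) (use assms finite_blists in auto)
  also have "(\<Sum>c\<in>{c::bool list. length c = t} - {w}. (if c = w then 1 else x))
       = (\<Sum>c\<in>{c::bool list. length c = t} - {w}. x)" by (rule sum.cong) auto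
  also have "\<dots> = (2^t - 1) * x"
    using assms finite_blists card_blists[of t] by (simp add: card_Diff_singleton of_nat_diff)
  finally show ?thesis by simp
qed

lemma gen_sum:
  fixes x :: real
  assumes "W \<in> mats t n"
  shows "(\<Sum>V\<in>mats t n. x ^ tdist n V W) = (1 + (2^t - 1) * x)^n"
  using assms
proof (induction n arbitrary: W)
  case 0
  have "mats t 0 = {replicate t []}" unfolding mats_def
  proof (intro equalityI subsetI)
    fix V assume "V \<in> {V. length V = t \<and> (\<forall>x\<in>set V. length x = 0)}"
    then have "length V = t" "\<forall>x\<in>set V. x = []" by auto
    then show "V \<in> {replicate t []}" using replicate_length_same[of V "[]"] by simp
  qed auto
  then show ?case by (simp add: tdist_def)
next
  case (Suc n)
  define w where "w = map hd W"
  define W' where "W' = map tl W"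
  have Weq: "W = map2 (#) w W'" unfolding w_def W'_def
    by (rule map2_hd_tl[symmetric]) (use Suc.prems in \<open>auto simp: mats_def\<close>)
  have lw: "length w = t" using Suc.prems unfolding w_def mats_def by auto
  have W': "W' \<in> mats t n" using Suc.prems unfolding W'_def mats_def by auto
  have "(\<Sum>V\<in>mats t (Suc n). x ^ tdist (Suc n) V W)
      = (\<Sum>p\<in>{c. length c = t} \<times> mats t n. x ^ tdist (Suc n) ((\<lambda>(c,V). map2 (#) c V) p) W)"
    unfolding mats_Suc by (rule sum.reindex[OF inj_map2, unfolded comp_def])
  also have "\<dots> = (\<Sum>p\<in>{c. length c = t} \<times> mats t n. (if fst p = w then 1 else x) * x ^ tdist n (snd p) W')"
  proof (rule sum.cong[OF refl])
    fix p assume p: "p \<in> {c::bool list. length c = t} \<times> mats t n"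
    obtain c V where pc: "p = (c, V)" by (cases p)
    have lc: "length c = t" and V: "V \<in> mats t n" using p unfolding pc by auto
    have "tdist (Suc n) (map2 (#) c V) W = (if c = w then 0 else 1) + tdist n V W'"
      unfolding Weq by (rule tdist_cons[OF lc lw V W'])
    then show "x ^ tdist (Suc n) ((\<lambda>(c,V). map2 (#) c V) p) W = (if fst p = w then 1 else x) * x ^ tdist n (snd p) W'"
      unfolding pc by (simp add: power_add)
  qed
  also have "\<dots> = (\<Sum>c\<in>{c. length c = t}. \<Sum>V\<in>mats t n. (if c = w then 1 else x) * x ^ tdist n V W')"
    by (simp only: sum.cartesian_product split_def)
  also have "\<dots> = (\<Sum>c\<in>{c. length c = t}. (if c = w then 1 else x)) * (\<Sum>V\<in>mats t n. x ^ tdist n V W')"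
    by (rule sum_product[symmetric])
  also have "\<dots> = (1 + (2^t - 1) * x) * (1 + (2^t - 1) * x)^n"
    using inner_sum[OF lw] Suc.IH[OF W'] by simp
  finally show ?case by simp
qed

lemma gcr_prop:
  assumes "C \<subseteq> {xs. length xs = n}" "replicate n False \<in> C"
  shows "\<forall>V. length V = t \<and> (\<forall>x \<in> set V. length x = n) \<longrightarrow>
      (\<exists>Cs. length Cs = t \<and> set Cs \<subseteq> C \<and> tdist n V Cs \<le> gcr t n C)"
  unfolding gcr_def
proof (rule LeastI[of _ n])
  show "\<forall>V. length V = t \<and> (\<forall>x \<in> set V. length x = n) \<longrightarrow>
      (\<exists>Cs. length Cs = t \<and> set Cs \<subseteq> C \<and> tdist n V Cs \<le> n)"
  proof (intro allI impI)
    fix V :: "bool list list"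
    have "tdist n V (replicate t (replicate n False)) \<le> card {..<n}"
      unfolding tdist_def by (rule card_mono) auto
    then show "\<exists>Cs. length Cs = t \<and> set Cs \<subseteq> C \<and> tdist n V Cs \<le> n"
      using assms(2) by (intro exI[of _ "replicate t (replicate n False)"]) auto
  qed
qed

lemma card_mats: "real (card (mats t n)) = 2^(t*n)"
proof -
  have W: "replicate t (replicate n False) \<in> mats t n" unfolding mats_def by auto
  have "real (card (mats t n)) = (\<Sum>V\<in>mats t n. (1::real) ^ tdist n V (replicate t (replicate n False)))"
    by simp
  also have "\<dots> = (1 + (2^t - 1) * 1)^n" by (rule gen_sum[OF W])
  finally show ?thesis by (simp add: power_mult)
qed

lemma cover_ineq:
  fixes x :: real
  assumes fin: "finite C" and len: "C \<subseteq> {xs. length xs = n}" and z: "replicate n False \<in> C"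
    and x: "0 < x" "x \<le> 1"
  shows "2^(t*n) * x ^ gcr t n C \<le> real (card C) ^ t * (1 + (2^t - 1) * x)^n"
proof -
  define \<rho> where "\<rho> = gcr t n C"
  define CS where "CS = {Cs. set Cs \<subseteq> C \<and> length Cs = t}"
  define B where "B Cs = {V \<in> mats t n. tdist n V Cs \<le> \<rho>}" for Cs
  have finCS: "finite CS" unfolding CS_def using fin by (rule finite_lists_length_eq)
  have cardCS: "card CS = card C ^ t" unfolding CS_def using fin by (rule card_lists_length_eq)
  have CSm: "Cs \<in> mats t n" if "Cs \<in> CS" for Cs using that len unfolding CS_def mats_def by auto
  have sub: "mats t n \<subseteq> (\<Union>Cs\<in>CS. B Cs)"
  proof
    fix V assume V: "V \<in> mats t n"
    then obtain Cs where "length Cs = t" "set Cs \<subseteq> C" "tdist n V Cs \<le> \<rho>"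
      using gcr_prop[OF len z, of t] unfolding mats_def \<rho>_def by blast
    then show "V \<in> (\<Union>Cs\<in>CS. B Cs)" using V unfolding CS_def B_def by auto
  qed
  have "card (mats t n) \<le> card (\<Union>Cs\<in>CS. B Cs)"
    by (rule card_mono) (use finCS finite_mats sub in \<open>auto simp: B_def\<close>)
  also have "\<dots> \<le> (\<Sum>Cs\<in>CS. card (B Cs))" by (rule card_UN_le[OF finCS])
  finally have c1: "real (card (mats t n)) \<le> (\<Sum>Cs\<in>CS. real (card (B Cs)))"
    by (metis of_nat_le_iff of_nat_sum)
  have c2: "real (card (B Cs)) * x ^ \<rho> \<le> (1 + (2^t - 1) * x)^n" if Cs: "Cs \<in> CS" for Cs
  proof -
    have "real (card (B Cs)) * x ^ \<rho> = (\<Sum>V\<in>B Cs. x ^ \<rho>)" by simp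
    also have "\<dots> \<le> (\<Sum>V\<in>B Cs. x ^ tdist n V Cs)"
      by (rule sum_mono) (use x in \<open>auto simp: B_def intro: power_decreasing\<close>)
    also have "\<dots> \<le> (\<Sum>V\<in>mats t n. x ^ tdist n V Cs)"
      by (rule sum_mono2) (use x finite_mats in \<open>auto simp: B_def\<close>)
    also have "\<dots> = (1 + (2^t - 1) * x)^n" by (rule gen_sum[OF CSm[OF Cs]])
    finally show ?thesis .
  qed
  have "2^(t*n) * x ^ \<rho> \<le> (\<Sum>Cs\<in>CS. real (card (B Cs))) * x ^ \<rho>"
    using c1 card_mats[of t n] x by (intro mult_right_mono) auto
  also have "\<dots> = (\<Sum>Cs\<in>CS. real (card (B Cs)) * x ^ \<rho>)" by (simp add: sum_distrib_right)
  also have "\<dots> \<le> (\<Sum>Cs\<in>CS. (1 + (2^t - 1) * x)^n)" by (rule sum_mono) (use c2 in auto)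
  also have "\<dots> = real (card C) ^ t * (1 + (2^t - 1) * x)^n" using cardCS by simp
  finally show ?thesis unfolding \<rho>_def .
qed

lemma ln_upper3:
  fixes s :: real
  assumes "0 \<le> s" "s \<le> 1/2"
  shows "- ln (1 - s) \<le> s + s^2/2 + s^3"
proof -
  define f where "f y = ln (1 - y) + y + y^2/2 + y^3" for y :: real
  have "f 0 \<le> f s"
  proof (rule DERIV_nonneg_imp_nondecreasing[OF assms(1)])
    fix y :: real assume y: "0 \<le> y" "y \<le> s"
    then have y1: "y < 1" using assms by simp
    have "DERIV f y :> (- 1 / (1 - y) + 1 + y + 3 * y^2)"
      unfolding f_def using y1
      by (auto intro!: derivative_eq_intros simp: power2_eq_square field_simps)
    moreover have "- 1 / (1 - y) + 1 + y + 3 * y^2 = (2*y^2 - 3*y^3) / (1 - y)"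
      using y1 by (simp add: field_simps power2_eq_square power3_eq_cube)
    moreover have "(2*y^2 - 3*y^3) / (1 - y) \<ge> 0"
    proof -
      have "2*y^2 - 3*y^3 = y^2 * (2 - 3*y)" by (simp add: algebra_simps power2_eq_square power3_eq_cube)
      also have "\<dots> \<ge> 0" using y assms by (intro mult_nonneg_nonneg) auto
      finally show ?thesis using y1 by simp
    qed
    ultimately show "\<exists>d. DERIV f y :> d \<and> d \<ge> 0" by auto
  qed
  then show ?thesis unfolding f_def by simp
qed

lemma ln_lower2:
  fixes y :: real
  assumes "0 \<le> y" "y < 1"
  shows "y + y^2/2 \<le> - ln (1 - y)"
proof -
  define f where "f z = - ln (1 - z) - z - z^2/2" for z :: real
  have "f 0 \<le> f y"
  proof (rule DERIV_nonneg_imp_nondecreasing[OF assms(1)])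
    fix z :: real assume z: "0 \<le> z" "z \<le> y"
    then have z1: "z < 1" using assms by simp
    have "DERIV f z :> (1 / (1 - z) - 1 - z)"
      unfolding f_def using z1
      by (auto intro!: derivative_eq_intros simp: power2_eq_square field_simps)
    moreover have "1 / (1 - z) - 1 - z = z^2 / (1 - z)"
      using z1 by (simp add: field_simps power2_eq_square)
    moreover have "z^2 / (1 - z) \<ge> 0" using z1 by simp
    ultimately show "\<exists>d. DERIV f z :> d \<and> d \<ge> 0" by auto
  qed
  then show ?thesis unfolding f_def by simp
qed

lemma lim_pow_powr: "(\<lambda>m::nat. real m ^ r / 2 powr (real m / 2)) \<longlonglongrightarrow> 0"
proof -
  define c :: real where "c = ln 2 / 2"
  have c: "c > 0" unfolding c_def by simp
  have lim1: "filterlim (\<lambda>m::nat. c * real m) at_top sequentially"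
    by (rule filterlim_tendsto_pos_mult_at_top[OF tendsto_const c filterlim_real_sequentially])
  have "(\<lambda>m::nat. (c * real m) ^ r / exp (c * real m)) \<longlonglongrightarrow> 0"
    by (rule filterlim_compose[OF tendsto_power_div_exp_0 lim1])
  then have "(\<lambda>m::nat. (1/c)^r * ((c * real m) ^ r / exp (c * real m))) \<longlonglongrightarrow> (1/c)^r * 0"
    by (intro tendsto_mult tendsto_const)
  moreover have "(1/c)^r * ((c * real m) ^ r / exp (c * real m)) = real m ^ r / 2 powr (real m / 2)" for m :: nat
  proof -
    have "exp (c * real m) = 2 powr (real m / 2)" unfolding c_def powr_def by simp
    then show ?thesis using c by (simp add: power_mult_distrib field_simps)
  qed
  ultimately show ?thesis by simp
qed

lemma key_alg:
  fixes n p K s \<rho> :: real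
  assumes p: "0 < p" "p < 1" and n: "n > 0" and K: "K > 0"
    and s: "s = sqrt (2*K / (n*p*(1-p)))" and shalf: "s \<le> 1/2" and \<rho>: "\<rho> \<ge> 0"
    and main: "\<rho> * (- ln (1 - s)) \<ge> n * (- ln (1 - p*s)) - K"
  shows "p*n - \<rho> \<le> sqrt (2*n*p*(1-p)*K) + 2*K/(1-p)"
proof -
  define q where "q = 1 - p"
  have q: "q > 0" using p unfolding q_def by simp
  have npq: "n*p*q > 0" using n p q by simp
  have s2: "s^2 = 2*K/(n*p*q)" unfolding s q_def using npq K q_def by simp
  have spos: "s > 0" unfolding s using npq K q_def by simp
  define U where "U = s + s^2/2 + s^3"
  have U1: "- ln (1 - s) \<le> U" unfolding U_def using ln_upper3[of s] spos shalf by simp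
  have "p*s \<le> 1*s" using spos p by (intro mult_right_mono) auto
  then have "p*s < 1" using shalf by simp
  then have L2: "p*s + (p*s)^2/2 \<le> - ln (1 - p*s)"
    using ln_lower2[of "p*s"] spos p by simp
  have Us: "U \<ge> s" unfolding U_def using spos by simp
  have r2: "\<rho> * (- ln (1 - s)) \<le> \<rho> * U" using U1 \<rho> by (rule mult_left_mono)
  have r1: "n * (p*s + (p*s)^2/2) - K \<le> \<rho> * (- ln (1 - s))"
    using main L2 n by (smt (verit) mult_left_mono)
  have rU: "\<rho> * U \<ge> n * (p*s + (p*s)^2/2) - K" using r1 r2 by linarith
  have "(p*n - \<rho>) * U \<le> p*n*U - (n * (p*s + (p*s)^2/2) - K)" using rU by (simp add: algebra_simps)
  also have "\<dots> = n*p*q*s^2/2 + n*p*s^3 + K"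
    unfolding U_def q_def by (simp add: field_simps power2_eq_square power3_eq_cube)
  finally have A1: "(p*n - \<rho>) * U \<le> n*p*q*s^2/2 + n*p*s^3 + K" .
  have numpos: "n*p*q*s^2/2 + n*p*s^3 + K \<ge> 0" using npq spos K n p by simp
  have "p*n - \<rho> \<le> (n*p*q*s^2/2 + n*p*s^3 + K) / s"
  proof (cases "p*n - \<rho> \<le> 0")
    case True
    have "0 \<le> (n*p*q*s^2/2 + n*p*s^3 + K) / s" using numpos spos by simp
    then show ?thesis using True by linarith
  next
    case False
    then have "(p*n - \<rho>) * s \<le> (p*n - \<rho>) * U" using Us by simp
    then have "(p*n - \<rho>) * s \<le> n*p*q*s^2/2 + n*p*s^3 + K" using A1 by simp
    then show ?thesis using spos by (simp add: field_simps)
  qed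
  also have "\<dots> = n*p*q*s/2 + K/s + n*p*s^2"
    using spos by (simp add: field_simps power2_eq_square power3_eq_cube)
  also have "n*p*s^2 = 2*K/q" unfolding s2 using n p q by (simp add: field_simps)
  also have "n*p*q*s/2 = K/s" using s2 spos n p q by (simp add: field_simps power2_eq_square)
  also have "K/s + K/s = sqrt (2*n*p*(1-p)*K)"
  proof -
    have "sqrt (2*n*p*(1-p)*K) * s = sqrt (2*n*p*q*K * (2*K/(n*p*q)))"
      unfolding s q_def by (rule real_sqrt_mult[symmetric])
    also have "2*n*p*q*K * (2*K/(n*p*q)) = (2*K)^2" using npq n p q by (simp add: field_simps power2_eq_square)
    also have "sqrt ((2*K)^2) = 2*K" using K by (simp only: real_sqrt_abs)
    finally have "sqrt (2*n*p*(1-p)*K) * s = 2*K" .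
    then show ?thesis using spos by (simp add: field_simps)
  qed
  finally show ?thesis unfolding q_def by simp
qed

lemma rm_log:
  fixes s :: real
  assumes t: "t \<ge> 1" and s: "0 \<le> s" "s < 1"
  shows "real (gcr t (2^m) (RM r m)) * (- ln (1 - s))
     \<ge> 2^m * (- ln (1 - (1 - 1/2^t) * s)) - real t * ln 2 * real (kk r m)"
proof -
  define A :: real where "A = 2^t"
  define p where "p = 1 - 1/A"
  define n :: nat where "n = 2^m"
  define \<rho> where "\<rho> = gcr t n (RM r m)"
  define x where "x = 1 - s"
  have "(2::real)^1 \<le> 2^t" by (rule power_increasing) (use t in auto)
  then have A: "A \<ge> 2" unfolding A_def by simp
  have p: "0 < p" "p < 1" unfolding p_def using A by auto
  have x: "0 < x" "x \<le> 1" unfolding x_def using s by auto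
  have ps: "p * s < 1" proof -
    have "p*s \<le> 1*s" using s p by (intro mult_right_mono) auto
    then show ?thesis using s by simp
  qed
  obtain fin len z cd where props: "finite (RM r m)" "RM r m \<subseteq> {xs. length xs = n}"
      "replicate n False \<in> RM r m" "card (RM r m) \<le> 2^(kk r m)"
    using RM_props[of r m] unfolding n_def by blast
  have cov: "2^(t*n) * x ^ \<rho> \<le> real (card (RM r m)) ^ t * (1 + (2^t - 1) * x)^n"
    unfolding \<rho>_def by (rule cover_ineq[OF props(1-3) x])
  have c1: "real (card (RM r m)) ^ t \<le> (2^(kk r m)) ^ t"
    using props(4) by (intro power_mono) (simp_all add: of_nat_le_iff[symmetric])
  have eq1: "1 + (2^t - 1) * x = A * (1 - p*s)"
    unfolding A_def p_def x_def using A by (simp add: field_simps A_def)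
  have eq2: "(2::real)^(t*n) = A^n" unfolding A_def by (simp add: power_mult)
  have pos1: "0 < 1 - p*s" using ps by simp
  have "A^n * x^\<rho> \<le> real (card (RM r m)) ^ t * (A * (1 - p*s))^n"
    using cov unfolding eq1 eq2 .
  also have "\<dots> \<le> (2^(kk r m))^t * (A * (1 - p*s))^n"
    by (rule mult_right_mono[OF c1]) (use pos1 A in simp)
  finally have "A^n * x^\<rho> \<le> (2^(kk r m))^t * (A * (1 - p*s))^n" .
  then have "A^n * x^\<rho> \<le> A^n * ((2^(kk r m))^t * (1 - p*s)^n)"
    by (simp only: power_mult_distrib mult_ac)
  then have ineq: "x^\<rho> \<le> (2^(kk r m))^t * (1 - p*s)^n"
    using A by simp
  have "ln (x^\<rho>) \<le> ln ((2^(kk r m))^t * (1 - p*s)^n)"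
    using ineq x pos1 by (subst ln_le_cancel_iff) auto
  then have "real \<rho> * ln x \<le> real t * (real (kk r m) * ln 2) + real n * ln (1 - p*s)"
    using pos1 by (simp add: ln_mult ln_realpow)
  then show ?thesis unfolding \<rho>_def x_def p_def A_def n_def by (simp add: algebra_simps)
qed

lemma kk_bound:
  assumes m: "m \<ge> 1"
  shows "real (kk r m) \<le> real m ^ r / fact r + real r * real m ^ (r - 1)"
proof -
  have "kk r m = (\<Sum>i<r. m choose i) + (m choose r)"
    unfolding kk_def by (simp add: lessThan_Suc_atMost[symmetric])
  then have e: "real (kk r m) = (\<Sum>i<r. real (m choose i)) + real (m choose r)" by simp
  have b1: "real (m choose r) \<le> real m ^ r / fact r"
  proof -
    have "(m choose r) * fact r \<le> m ^ r" by (rule binomial_fact_pow)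
    then have "real (m choose r) * fact r \<le> real m ^ r"
      by (metis of_nat_fact of_nat_le_iff of_nat_mult of_nat_power)
    then show ?thesis by (simp add: field_simps)
  qed
  have b2: "real (m choose i) \<le> real m ^ (r - 1)" if "i < r" for i
  proof -
    have "m choose i \<le> m ^ i"
      by (cases "i \<le> m") (auto simp: binomial_le_pow binomial_eq_0)
    also have "m ^ i \<le> m ^ (r - 1)" using m that by (intro power_increasing) auto
    finally show ?thesis by (metis of_nat_le_iff of_nat_power)
  qed
  have "(\<Sum>i<r. real (m choose i)) \<le> real (card {..<r}) * real m ^ (r - 1)"
    by (rule sum_bounded_above) (use b2 in auto)
  then show ?thesis using e b1 by simp
qed

lemma sqrt_pow_powr:
  fixes x :: real
  assumes "x > 0"
  shows "sqrt (x ^ j) = x powr (real j / 2)"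
proof -
  have "(x powr (real j / 2))^2 = x powr (real j / 2 * 2)"
    using assms by (simp add: powr_realpow[symmetric] powr_powr)
  also have "\<dots> = x ^ j" using assms by (simp add: powr_realpow)
  finally have "x ^ j = (x powr (real j / 2))^2" by simp
  then show ?thesis by simp
qed

theorem theorem12:
  fixes t r :: nat
  assumes "t \<ge> 1" and "r \<ge> 1"
  shows "\<exists>g :: nat \<Rightarrow> real. g \<longlonglongrightarrow> 0 \<and>
    (\<forall>m \<ge> r. real (gcr t (2^m) (RM r m)) \<ge>
        (1 - 1 / 2^t) * 2^m
        - sqrt (2 * real t * (2^t - 1) * ln 2) / (2^t * sqrt (fact r))
          * real m powr (real r / 2) * 2 powr (real m / 2) * (1 + g m))"
proof -
  define A :: real where "A = 2^t"
  define p where "p = 1 - 1/A"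
  define C0 where "C0 = sqrt (2 * real t * (2^t - 1) * ln 2) / (2^t * sqrt (fact r))"
  define D where "D m = C0 * real m powr (real r / 2) * 2 powr (real m / 2)" for m :: nat
  define \<rho> where "\<rho> m = real (gcr t (2^m) (RM r m))" for m :: nat
  define h where "h m = (p * 2^m - \<rho> m) / D m - 1" for m :: nat
  define c2 where "c2 = 2 * A * real t * ln 2 * (real r + 1) / C0"
  define c3 where "c3 = 8 * real t * ln 2 * (real r + 1) * A^2 / (A - 1)"
  define e where "e m = fact r * real r / real m + c2 * (real m ^ r / 2 powr (real m / 2))" for m :: nat
  define g where "g m = max (h m) (e m)" for m :: nat
  define W where "W = 2 * real t * (A - 1) * ln 2 / A^2"
  have "(2::real)^1 \<le> 2^t" by (rule power_increasing) (use assms in auto)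
  then have A2: "A \<ge> 2" unfolding A_def by simp
  have p: "0 < p" "p < 1" unfolding p_def using A2 by auto
  have Wpos: "W > 0" unfolding W_def using A2 assms by simp
  have C0W: "C0 = sqrt (W / fact r)"
  proof -
    have "sqrt (W / fact r) = sqrt (2 * real t * (A - 1) * ln 2) / (sqrt (A^2) * sqrt (fact r))"
      unfolding W_def by (simp add: real_sqrt_divide real_sqrt_mult)
    also have "sqrt (A^2) = A" using A2 by simp
    finally show ?thesis unfolding C0_def A_def by simp
  qed
  have C0pos: "C0 > 0" unfolding C0W using Wpos by simp
  have Dpos: "D m > 0" if "m \<ge> 1" for m using that C0pos unfolding D_def by simp
  have part_a: "\<rho> m \<ge> p * 2^m - D m * (1 + g m)" if "m \<ge> r" for m
  proof -
    have m1: "m \<ge> 1" using that assms by simp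
    have "D m * (1 + h m) \<le> D m * (1 + g m)"
      using Dpos[OF m1] unfolding g_def by (intro mult_left_mono) auto
    moreover have "D m * (1 + h m) = p * 2^m - \<rho> m"
      unfolding h_def using Dpos[OF m1] by (simp add: field_simps)
    ultimately show ?thesis by simp
  qed
  have e0: "e \<longlonglongrightarrow> 0"
  proof -
    have "(\<lambda>m::nat. fact r * real r / real m) \<longlonglongrightarrow> 0"
      by (intro tendsto_divide_0[OF tendsto_const] filterlim_at_top_imp_at_infinity[OF filterlim_real_sequentially])
    moreover have "(\<lambda>m::nat. c2 * (real m ^ r / 2 powr (real m / 2))) \<longlonglongrightarrow> c2 * 0"
      by (intro tendsto_mult tendsto_const lim_pow_powr)
    ultimately have "(\<lambda>m. fact r * real r / real m + c2 * (real m ^ r / 2 powr (real m / 2))) \<longlonglongrightarrow> 0 + c2 * 0"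
      by (rule tendsto_add)
    then show ?thesis unfolding e_def by simp
  qed
  have c3pos: "c3 > 0" unfolding c3_def using A2 assms by simp
  have ev1: "eventually (\<lambda>m. real m ^ r / 2 powr (real m / 2) < 1 / c3) sequentially"
    using order_tendstoD(2)[OF lim_pow_powr] c3pos by simp
  have ev: "eventually (\<lambda>m. h m \<le> e m) sequentially"
    using ev1 eventually_ge_at_top[of 1]
  proof eventually_elim
    case (elim m)
    then have m1: "m \<ge> 1" and small: "real m ^ r / 2 powr (real m / 2) < 1 / c3" by auto
    define n :: real where "n = 2^m"
    define k where "k = real (kk r m)"
    define K where "K = real t * ln 2 * k"
    define s where "s = sqrt (2*K / (n*p*(1-p)))"
    define y where "y = fact r * real r / real m"
    define z where "z = c2 * (real m ^ r / 2 powr (real m / 2))"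
    have mpos: "real m > 0" using m1 by simp
    have npos: "n > 0" unfolding n_def by simp
    have k1: "k \<ge> 1" unfolding k_def kk_def
    proof -
      have "(1::nat) = (m choose 0)" by simp
      also have "\<dots> \<le> (\<Sum>i\<le>r. m choose i)" by (rule member_le_sum) auto
      finally show "1 \<le> real (\<Sum>i\<le>r. m choose i)" by linarith
    qed
    have Kpos: "K > 0" unfolding K_def using k1 assms by simp
    have kb: "k \<le> real m ^ r / fact r + real r * real m ^ (r - 1)"
      unfolding k_def by (rule kk_bound[OF m1])
    have mr: "real m ^ r = real m * real m ^ (r - 1)" using assms by (cases r) auto
    have kb1: "k \<le> real m ^ r / fact r * (1 + y)"
    proof -
      have "real m ^ r / fact r * y = real r * real m ^ (r - 1)"
        unfolding y_def using mpos mr by (simp add: field_simps)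
      moreover have "real m ^ r / fact r * (1 + y) = real m ^ r / fact r + real m ^ r / fact r * y"
        by (simp add: distrib_left)
      ultimately show ?thesis using kb by linarith
    qed
    have kb2: "k \<le> (real r + 1) * real m ^ r"
    proof -
      have "real m ^ r / fact r \<le> real m ^ r"
        using mpos by (simp add: divide_le_eq fact_ge_1 mult_le_cancel_left1)
      moreover have "real m ^ (r - 1) \<le> real m ^ r" using m1 by (intro power_increasing) auto
      then have "real r * real m ^ (r - 1) \<le> real r * real m ^ r" by (intro mult_left_mono) auto
      ultimately show ?thesis using kb by (simp add: algebra_simps)
    qed
    have Kb: "K \<le> real t * ln 2 * (real r + 1) * real m ^ r"
      unfolding K_def using kb2 assms by (simp add: mult_left_mono)
    have pq: "p * (1 - p) = (A - 1) / A^2" unfolding p_def using A2 by (simp add: field_simps power2_eq_square)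
    have pow_le: "2 powr (real m / 2) \<le> 2^m"
    proof -
      have "2 powr (real m / 2) \<le> 2 powr (real m)" by (intro powr_mono) auto
      then show ?thesis by (simp add: powr_realpow)
    qed
    have "c3 * real m ^ r < 2 powr (real m / 2)"
      using small c3pos by (simp add: field_simps)
    then have c3n: "c3 * real m ^ r \<le> n" using pow_le unfolding n_def by simp
    have "8 * K \<le> 8 * (real t * ln 2 * (real r + 1) * real m ^ r)" using Kb by simp
    also have "\<dots> = c3 * real m ^ r * ((A - 1) / A^2)" unfolding c3_def using A2 by (simp add: field_simps)
    also have "\<dots> \<le> n * ((A - 1) / A^2)" using c3n A2 by (intro mult_right_mono) auto
    finally have "8 * K \<le> n * (p * (1 - p))" unfolding pq .
    then have "2*K / (n*p*(1-p)) \<le> 1/4" using npos p by (simp add: field_simps)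
    then have shalf: "s \<le> 1/2" unfolding s_def
      by (metis real_sqrt_four real_sqrt_divide real_sqrt_le_iff real_sqrt_one)
    have s0: "0 \<le> s" unfolding s_def using Kpos npos p by simp
    have \<rho>0: "\<rho> m \<ge> 0" unfolding \<rho>_def by simp
    have main: "\<rho> m * (- ln (1 - s)) \<ge> n * (- ln (1 - p * s)) - K"
      using rm_log[OF assms(1) s0, of m r] shalf unfolding \<rho>_def n_def K_def k_def p_def A_def by simp
    have key: "p*n - \<rho> m \<le> sqrt (2*n*p*(1-p)*K) + 2*K/(1-p)"
      by (rule key_alg[OF p npos Kpos s_def shalf \<rho>0 main])
    have sq1: "sqrt (2*n*p*(1-p)*K) \<le> D m * (1 + y)"
    proof -
      have y0: "y \<ge> 0" unfolding y_def by simp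
      have "2*n*p*(1-p)*K = 2*n*(p*(1-p))*K" by (simp add: mult_ac)
      also have "\<dots> = W * n * k" unfolding pq W_def K_def using A2 by (simp add: field_simps)
      also have "\<dots> \<le> W * n * (real m ^ r / fact r * (1 + y)^2)"
      proof -
        have "real m ^ r / fact r * (1 + y) \<le> real m ^ r / fact r * (1 + y)^2"
          using y0 by (intro mult_left_mono) (auto simp: power2_eq_square)
        then show ?thesis using kb1 Wpos npos by (intro mult_left_mono) auto
      qed
      also have "\<dots> = (W / fact r) * n * real m ^ r * (1 + y)^2" by simp
      finally have "sqrt (2*n*p*(1-p)*K) \<le> sqrt ((W / fact r) * n * real m ^ r * (1 + y)^2)"
        by (rule real_sqrt_le_mono)
      also have "\<dots> = sqrt (W / fact r) * sqrt n * sqrt (real m ^ r) * (1 + y)"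
        using y0 by (simp only: real_sqrt_mult real_sqrt_abs abs_of_nonneg[of "1+y"])
      also have "sqrt n = 2 powr (real m / 2)" unfolding n_def by (rule sqrt_pow_powr) simp
      also have "sqrt (real m ^ r) = real m powr (real r / 2)" by (rule sqrt_pow_powr[OF mpos])
      finally show ?thesis unfolding D_def C0W by (simp add: mult_ac)
    qed
    have sq2: "2*K/(1-p) \<le> D m * z"
    proof -
      have "2*K/(1-p) = 2 * A * K" unfolding p_def by simp
      also have "\<dots> \<le> 2 * A * (real t * ln 2 * (real r + 1) * real m ^ r)"
        using Kb A2 by (intro mult_left_mono) auto
      also have "\<dots> = C0 * c2 * real m ^ r" unfolding c2_def using C0pos by (simp add: field_simps)
      also have "\<dots> \<le> C0 * c2 * real m ^ r * real m powr (real r / 2)"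
      proof -
        have "1 \<le> real m powr (real r / 2)" using m1 by (intro ge_one_powr_ge_zero) auto
        moreover have "C0 * c2 * real m ^ r \<ge> 0" unfolding c2_def using C0pos assms A2 by simp
        ultimately show ?thesis by (simp add: mult_le_cancel_left1)
      qed
      also have "\<dots> = D m * z" unfolding D_def z_def by (simp add: field_simps)
      finally show ?thesis .
    qed
    have "p * n - \<rho> m \<le> D m * (1 + y + z)" using key sq1 sq2 by (simp add: algebra_simps)
    then have "(p * n - \<rho> m) / D m \<le> 1 + y + z" using Dpos[OF m1] by (simp add: divide_le_eq mult.commute)
    then show "h m \<le> e m" unfolding h_def e_def y_def z_def n_def by simp
  qed
  have gev: "eventually (\<lambda>m. e m = g m) sequentially"
    using ev by eventually_elim (simp add: g_def)
  have g0: "g \<longlonglongrightarrow> 0" using tendsto_cong[OF gev] e0 by simp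
  show ?thesis
  proof (intro exI[of _ g] conjI g0 allI impI)
    fix m :: nat assume "m \<ge> r"
    then show "real (gcr t (2^m) (RM r m)) \<ge>
        (1 - 1 / 2^t) * 2^m
        - sqrt (2 * real t * (2^t - 1) * ln 2) / (2^t * sqrt (fact r))
          * real m powr (real r / 2) * 2 powr (real m / 2) * (1 + g m)"
      using part_a[of m] unfolding \<rho>_def D_def C0_def p_def A_def by simp
  qed
qed

end
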